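(* Let $m,n$ be integers with $m\equiv n\equiv 0\pmod 4$ and $m,n>4$. Then the direct product $C_m\times C_n$ is a distance magic graph, but it is not a balanced distance magic graph.
   Context: All graphs are finite and simple; $C_n$ denotes the cycle on $n$ vertices. For a graph $G$ and vertex $x$, $N(x)$ is the (open) neighborhood of $x$. A distance magic labeling of a graph $G$ of order $N$ is a bijection $\ell\colon V(G)\to\{1,\dots,N\}$ for which there is a constant $k$ such that $\sum_{y\in N(x)}\ell(y)=k$ for every $x\in V(G)$; $G$ is distance magic if it admits such a labeling. A balanced distance magic labeling of a graph with an even number $N$ of vertices is a distance magic labeling $\ell$ such that for every vertex $w$: whenever $u\in N(w)$ has $\ell(u)=i$, there is $v\in N(w)$ with $\ell(v)=N+1-i$; a graph is balanced distance magic if it has an even number of vertices and admits such a labeling. The direct product $G\times H$ has vertex set $V(G)\times V(H)$, with $(g,h)$ adjacent to $(g',h')$ iff $gg'\in E(G)$ and $hh'\in E(H)$. *)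

theory Defs
  imports Main
begin

text \<open>A finite simple graph is given by a vertex set V and a symmetric
irreflexive adjacency relation E (only its restriction to V matters).\<close>

definition nbhd :: "'a set \<Rightarrow> ('a \<Rightarrow> 'a \<Rightarrow> bool) \<Rightarrow> 'a \<Rightarrow> 'a set" where
  "nbhd V E x = {y \<in> V. E x y}"

definition distance_magic_labeling ::
  "'a set \<Rightarrow> ('a \<Rightarrow> 'a \<Rightarrow> bool) \<Rightarrow> ('a \<Rightarrow> nat) \<Rightarrow> bool" where
  "distance_magic_labeling V E l \<longleftrightarrow>
     bij_betw l V {1..card V} \<and>
     (\<exists>k. \<forall>x\<in>V. (\<Sum>y\<in>nbhd V E x. l y) = k)"

definition distance_magic :: "'a set \<Rightarrow> ('a \<Rightarrow> 'a \<Rightarrow> bool) \<Rightarrow> bool" where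
  "distance_magic V E \<longleftrightarrow> (\<exists>l. distance_magic_labeling V E l)"

definition balanced_distance_magic_labeling ::
  "'a set \<Rightarrow> ('a \<Rightarrow> 'a \<Rightarrow> bool) \<Rightarrow> ('a \<Rightarrow> nat) \<Rightarrow> bool" where
  "balanced_distance_magic_labeling V E l \<longleftrightarrow>
     distance_magic_labeling V E l \<and>
     (\<forall>w\<in>V. \<forall>u\<in>nbhd V E w. \<exists>v\<in>nbhd V E w. l v = card V + 1 - l u)"

definition balanced_distance_magic :: "'a set \<Rightarrow> ('a \<Rightarrow> 'a \<Rightarrow> bool) \<Rightarrow> bool" where
  "balanced_distance_magic V E \<longleftrightarrow>
     even (card V) \<and> (\<exists>l. balanced_distance_magic_labeling V E l)"

definition cycle_verts :: "nat \<Rightarrow> nat set" where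
  "cycle_verts n = {0..<n}"

definition cycle_adj :: "nat \<Rightarrow> nat \<Rightarrow> nat \<Rightarrow> bool" where
  "cycle_adj n i j \<longleftrightarrow> i < n \<and> j < n \<and> (j = (i + 1) mod n \<or> i = (j + 1) mod n)"

definition direct_prod_adj ::
  "('a \<Rightarrow> 'a \<Rightarrow> bool) \<Rightarrow> ('b \<Rightarrow> 'b \<Rightarrow> bool) \<Rightarrow> 'a \<times> 'b \<Rightarrow> 'a \<times> 'b \<Rightarrow> bool" where
  "direct_prod_adj E F x y \<longleftrightarrow> E (fst x) (fst y) \<and> F (snd x) (snd y)"

end

theory Submission imports Defs begin

definition sg :: "nat \<Rightarrow> int" where "sg x = (if x mod 4 < 2 then 1 else -1)"
definition hh :: "nat \<Rightarrow> int" where "hh x = 2 * int (2 * (x div 4) + x mod 2) + 1"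
definition LL :: "nat \<Rightarrow> nat \<Rightarrow> nat \<Rightarrow> nat \<Rightarrow> int" where
  "LL m n a b = (int (m*n) + 1 + sg b * int n * hh a + sg a * hh b) div 2"

lemma m4: "(x::nat) mod 4 = (if x mod 4 < 2 then 0 else 2) + x mod 2"
proof -
  have h: "x mod 4 mod 2 = x mod 2" by (simp add: mod_mod_cancel)
  have "x mod 4 < 4" by simp
  then consider "x mod 4 = 0" | "x mod 4 = 1" | "x mod 4 = 2" | "x mod 4 = 3" by linarith
  then show ?thesis using h by cases auto
qed

lemma sg_cases: "sg x = 1 \<or> sg x = -1" by (simp add: sg_def)

lemma two_LL:
  assumes "even n"
  shows "2 * LL m n a b = int (m*n) + 1 + sg b * int n * hh a + sg a * hh b"
proof -
  obtain k where n: "n = 2*k" using assms by blast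
  define q where "q = int (2 * (b div 4) + b mod 2)"
  have hb: "hh b = 2*q+1" by (simp add: hh_def q_def)
  have "int (m*n) + 1 + sg b * int n * hh a + sg a * hh b
        = 2 * (int (m*k) + sg b * int k * hh a + (if sg a = 1 then q + 1 else - q))"
    using sg_cases[of a] hb n by (auto simp: algebra_simps)
  then show ?thesis unfolding LL_def by simp
qed

lemma hh_bounds:
  assumes "4 dvd m" "a < m"
  shows "1 \<le> hh a" "hh a \<le> int m - 1"
proof -
  obtain k where m: "m = 4*k" using assms by blast
  have "a div 4 < k" using assms m by auto
  then have "int (a div 4) \<le> int k - 1" by linarith
  moreover have "int (a mod 2) \<le> 1" by simp
  ultimately show "hh a \<le> int m - 1" using m by (simp add: hh_def)
  show "1 \<le> hh a" by (simp add: hh_def)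
qed

lemma hh_odd: "\<exists>q. hh a = 2*q+1 \<and> q \<ge> 0"
  by (rule exI[of _ "int (2 * (a div 4) + a mod 2)"]) (simp add: hh_def)

lemma LL_bounds:
  assumes "4 dvd m" "4 dvd n" "a < m" "b < n"
  shows "1 \<le> LL m n a b" "LL m n a b \<le> int (m*n)"
proof -
  have ev: "even n" using assms(2) by (metis dvd_trans even_numeral)
  have ha: "1 \<le> hh a" "hh a \<le> int m - 1" using hh_bounds assms by auto
  have hb: "1 \<le> hh b" "hh b \<le> int n - 1" using hh_bounds assms by auto
  have p1: "int n * hh a \<le> int n * (int m - 1)" using ha by (simp add: mult_left_mono)
  have p2: "int n * hh a \<ge> 0" using ha by simp
  have X: "\<bar>sg b * int n * hh a\<bar> \<le> int n * (int m - 1)"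
    using sg_cases[of b] p1 p2 by auto
  have Y: "\<bar>sg a * hh b\<bar> \<le> int n - 1" using sg_cases[of a] hb by auto
  have e: "2 * LL m n a b = int (m*n) + 1 + sg b * int n * hh a + sg a * hh b" using two_LL[OF ev] .
  have mn: "int (m*n) = int n * int m" by simp
  have d: "int n * (int m - 1) = int n * int m - int n" by (simp add: algebra_simps)
  show "1 \<le> LL m n a b" using X Y e mn d by linarith
  show "LL m n a b \<le> int (m*n)" using X Y e mn d by linarith
qed

lemma LL_inj:
  assumes "4 dvd m" "4 dvd n" "a < m" "b < n" "a' < m" "b' < n"
    and eq: "LL m n a b = LL m n a' b'"
  shows "a = a' \<and> b = b'"
proof -
  have ev: "even n" using assms(2) by (metis dvd_trans even_numeral)
  have hb: "1 \<le> hh b" "hh b \<le> int n - 1" using hh_bounds assms by auto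
  have hb': "1 \<le> hh b'" "hh b' \<le> int n - 1" using hh_bounds assms by auto
  define X where "X = sg b * hh a"
  define X' where "X' = sg b' * hh a'"
  define Y where "Y = sg a * hh b"
  define Y' where "Y' = sg a' * hh b'"
  have E: "int n * X + Y = int n * X' + Y'"
    using two_LL[OF ev, of m a b] two_LL[OF ev, of m a' b'] eq
    unfolding X_def X'_def Y_def Y'_def by (simp add: algebra_simps)
  have Yb: "\<bar>Y\<bar> \<le> int n - 1" "\<bar>Y'\<bar> \<le> int n - 1"
    using sg_cases[of a] sg_cases[of a'] hb hb' unfolding Y_def Y'_def by auto
  obtain q where q: "hh a = 2*q+1" using hh_odd by blast
  obtain q' where q': "hh a' = 2*q'+1" using hh_odd by blast
  obtain t where t: "X - X' = 2*t"
  proof -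
    have "X - X' = 2 * ((if sg b = 1 then q else -q-1) - (if sg b' = 1 then q' else -q'-1))"
      using sg_cases[of b] sg_cases[of b'] q q' unfolding X_def X'_def by auto
    then show ?thesis using that by blast
  qed
  have E2: "int n * (2*t) = Y' - Y" using E t by (simp add: algebra_simps)
  have "t = 0"
  proof (rule ccontr)
    assume "t \<noteq> 0"
    then have "\<bar>t\<bar> \<ge> 1" by simp
    then have "int n * \<bar>t\<bar> \<ge> int n" by (simp add: mult_le_cancel_left1)
    then have "\<bar>int n * (2*t)\<bar> \<ge> 2 * int n" by (simp add: abs_mult)
    then show False using E2 Yb by linarith
  qed
  then have XX: "X = X'" and YY: "Y = Y'" using t E by auto
  have ha0: "hh a \<ge> 1" "hh a' \<ge> 1" using hh_bounds assms by auto
  have hb0: "hh b \<ge> 1" "hh b' \<ge> 1" using hb hb' by auto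
  have s1: "sg b = sg b' \<and> hh a = hh a'"
    using XX sg_cases[of b] sg_cases[of b'] ha0 unfolding X_def X'_def by auto
  have s2: "sg a = sg a' \<and> hh b = hh b'"
    using YY sg_cases[of a] sg_cases[of a'] hb0 unfolding Y_def Y'_def by auto
  have key: "\<And>x y. sg x = sg y \<Longrightarrow> hh x = hh y \<Longrightarrow> x = y"
  proof -
    fix x y assume "sg x = sg y" "hh x = hh y"
    then have A: "(x mod 4 < 2) = (y mod 4 < 2)" and B: "2 * (x div 4) + x mod 2 = 2 * (y div 4) + y mod 2"
      by (auto simp: sg_def hh_def split: if_splits)
    have p: "x mod 2 = y mod 2" using B by (metis add.commute mod_mult_self2 mod_mod_trivial)
    then have d: "x div 4 = y div 4" using B by simp
    have "x mod 4 = y mod 4" using m4[of x] m4[of y] A p by simp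
    then show "x = y" using d by (metis div_mult_mod_eq)
  qed
  show ?thesis using key s1 s2 by auto
qed

lemma modp1: "(a::nat) < m \<Longrightarrow> (a+1) mod m = (if a+1 = m then 0 else a+1)" by auto
lemma modm1: "(i::nat) < m \<Longrightarrow> (i+m-1) mod m = (if i = 0 then m-1 else i-1)"
proof -
  assume i: "i < m"
  show ?thesis
  proof (cases "i = 0")
    case True then show ?thesis using i by simp
  next
    case False
    then have "i+m-1 = (i-1) + m" by simp
    then have "(i+m-1) mod m = ((i-1) + m) mod m" by simp
    also have "\<dots> = i - 1" using i by simp
    finally show ?thesis using False by simp
  qed
qed

lemma adj_iff:
  assumes "i < m" "a < m" "2 < m"
  shows "cycle_adj m i a \<longleftrightarrow> a = (i+1) mod m \<or> a = (i+m-1) mod m"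
  using assms modp1[of a m] modp1[of i m] modm1[of i m] unfolding cycle_adj_def
  by (auto split: if_splits)

definition nb :: "nat \<Rightarrow> nat \<Rightarrow> nat set" where "nb m i = {(i+1) mod m, (i+m-1) mod m}"

lemma nbhd_eq:
  assumes "i < m" "j < n" "2 < m" "2 < n"
  shows "nbhd (cycle_verts m \<times> cycle_verts n) (direct_prod_adj (cycle_adj m) (cycle_adj n)) (i,j)
         = nb m i \<times> nb n j"
proof -
  have m0: "0 < m" "0 < n" using assms by auto
  show ?thesis
    unfolding nbhd_def direct_prod_adj_def cycle_verts_def nb_def
    using adj_iff[OF assms(1) _ assms(3)] adj_iff[OF assms(2) _ assms(4)] m0
    by (auto simp: mod_less_divisor)
qed

lemma sg_mod: "sg x = sg (x mod 4)" by (simp add: sg_def)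

lemma sg_pair:
  assumes "4 dvd m" "4 \<le> m"
  shows "sg ((i+1) mod m) + sg ((i+m-1) mod m) = 0"
proof -
  obtain k where k: "m = 4*k" using assms by blast
  have k1: "k \<ge> 1" using k assms by simp
  have e1: "sg ((i+1) mod m) = sg ((i+1) mod 4)"
    by (metis assms(1) mod_mod_cancel sg_mod)
  have "i + m - 1 = (i+3) + 4*(k-1)" using k k1 by simp
  then have "(i+m-1) mod 4 = (i+3) mod 4" by simp
  then have e2: "sg ((i+m-1) mod m) = sg ((i+3) mod 4)"
    by (metis assms(1) mod_mod_cancel sg_mod)
  have "i mod 4 < 4" by simp
  then consider "i mod 4 = 0" | "i mod 4 = 1" | "i mod 4 = 2" | "i mod 4 = 3" by linarith
  moreover have "(i+1) mod 4 = (i mod 4 + 1) mod 4" "(i+3) mod 4 = (i mod 4 + 3) mod 4"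
    by (metis mod_add_left_eq)+
  ultimately have "sg ((i+1) mod 4) + sg ((i+3) mod 4) = 0"
    by cases (simp_all add: sg_def)
  then show ?thesis using e1 e2 by simp
qed

lemma nbsum:
  assumes "4 dvd m" "4 dvd n" "4 < m" "4 < n" "i < m" "j < n"
  shows "(\<Sum>p\<in>nb m i \<times> nb n j. nat (LL m n (fst p) (snd p))) = 2 * (m*n+1)"
proof -
  define a1 where "a1 = (i+1) mod m"
  define a2 where "a2 = (i+m-1) mod m"
  define b1 where "b1 = (j+1) mod n"
  define b2 where "b2 = (j+n-1) mod n"
  have sa: "sg a2 = - sg a1" using sg_pair[OF assms(1)] assms(3) unfolding a1_def a2_def
    by (simp add: eq_neg_iff_add_eq_0 add.commute)
  have sb: "sg b2 = - sg b1" using sg_pair[OF assms(2)] assms(4) unfolding b1_def b2_def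
    by (simp add: eq_neg_iff_add_eq_0 add.commute)
  have a12: "a1 \<noteq> a2" using sa sg_cases[of a1] by auto
  have b12: "b1 \<noteq> b2" using sb sg_cases[of b1] by auto
  have am: "a1 < m" "a2 < m" "b1 < n" "b2 < n" using assms unfolding a1_def a2_def b1_def b2_def by auto
  have pos: "\<And>a b. a < m \<Longrightarrow> b < n \<Longrightarrow> int (nat (LL m n a b)) = LL m n a b"
    using LL_bounds(1)[OF assms(1,2)] by (metis nat_0_le order_trans zero_le_one)
  have ev: "even n" using assms(2) by (metis dvd_trans even_numeral)
  have "int (\<Sum>p\<in>nb m i \<times> nb n j. nat (LL m n (fst p) (snd p)))
      = (\<Sum>p\<in>nb m i \<times> nb n j. int (nat (LL m n (fst p) (snd p))))" by simp
  also have "\<dots> = (\<Sum>a\<in>nb m i. \<Sum>b\<in>nb n j. int (nat (LL m n a b)))"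
    unfolding sum.cartesian_product by (rule sum.cong) auto
  also have "\<dots> = LL m n a1 b1 + LL m n a1 b2 + LL m n a2 b1 + LL m n a2 b2"
    unfolding nb_def a1_def[symmetric] a2_def[symmetric] b1_def[symmetric] b2_def[symmetric]
    using a12 b12 am pos by simp
  finally have S: "int (\<Sum>p\<in>nb m i \<times> nb n j. nat (LL m n (fst p) (snd p)))
      = LL m n a1 b1 + LL m n a1 b2 + LL m n a2 b1 + LL m n a2 b2" .
  have "2 * (LL m n a1 b1 + LL m n a1 b2 + LL m n a2 b1 + LL m n a2 b2) = 4 * (int (m*n) + 1)"
    using two_LL[OF ev, of m a1 b1] two_LL[OF ev, of m a1 b2] two_LL[OF ev, of m a2 b1]
      two_LL[OF ev, of m a2 b2] sa sb by (simp add: algebra_simps)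
  then have "int (\<Sum>p\<in>nb m i \<times> nb n j. nat (LL m n (fst p) (snd p))) = int (2 * (m*n+1))"
    using S by simp
  then show ?thesis by (simp only: of_nat_eq_iff)
qed

theorem mainTheorem10:
  fixes m n :: nat
  assumes "4 dvd m" and "4 dvd n" and "m > 4" and "n > 4"
  shows "distance_magic (cycle_verts m \<times> cycle_verts n)
           (direct_prod_adj (cycle_adj m) (cycle_adj n))
       \<and> \<not> balanced_distance_magic (cycle_verts m \<times> cycle_verts n)
           (direct_prod_adj (cycle_adj m) (cycle_adj n))"
proof -
  define V where "V = cycle_verts m \<times> cycle_verts n"
  define E where "E = direct_prod_adj (cycle_adj m) (cycle_adj n)"
  define l where "l = (\<lambda>p. nat (LL m n (fst p) (snd p)))"
  have cV: "card V = m*n" unfolding V_def cycle_verts_def by (simp add: card_cartesian_product)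
  have inj: "inj_on l V"
  proof
    fix p q assume p: "p \<in> V" and q: "q \<in> V" and e: "l p = l q"
    have b: "1 \<le> LL m n (fst p) (snd p)" "1 \<le> LL m n (fst q) (snd q)"
      using LL_bounds[OF assms(1,2)] p q unfolding V_def cycle_verts_def by auto
    then have "LL m n (fst p) (snd p) = LL m n (fst q) (snd q)" using e unfolding l_def by simp
    then show "p = q" using LL_inj[OF assms(1,2)] p q unfolding V_def cycle_verts_def
      by (auto simp: prod_eq_iff)
  qed
  have sub: "l ` V \<subseteq> {1..m*n}"
  proof
    fix x assume "x \<in> l ` V"
    then obtain p where p: "p \<in> V" "x = l p" by blast
    have "1 \<le> LL m n (fst p) (snd p)" "LL m n (fst p) (snd p) \<le> int (m*n)"
      using LL_bounds[OF assms(1,2)] p unfolding V_def cycle_verts_def by auto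
    then show "x \<in> {1..m*n}" using p unfolding l_def by (auto simp: nat_le_iff)
  qed
  have img: "l ` V = {1..m*n}"
  proof (rule card_subset_eq)
    show "finite {1..m*n}" by simp
    show "l ` V \<subseteq> {1..m*n}" by (rule sub)
    show "card (l ` V) = card {1..m*n}" using card_image[OF inj] cV by simp
  qed
  have bij: "bij_betw l V {1..card V}" unfolding bij_betw_def using inj img cV by simp
  have dml: "distance_magic_labeling V E l"
    unfolding distance_magic_labeling_def
  proof (intro conjI bij exI[of _ "2*(m*n+1)"] ballI)
    fix x assume x: "x \<in> V"
    obtain i j where ij: "x = (i,j)" "i < m" "j < n" using x unfolding V_def cycle_verts_def by auto
    show "(\<Sum>y\<in>nbhd V E x. l y) = 2*(m*n+1)"
      unfolding ij(1) V_def E_def l_def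
      using nbhd_eq[OF ij(2,3)] nbsum[OF assms ij(2,3)] assms by simp
  qed
  have part1: "distance_magic V E" unfolding distance_magic_def using dml by blast
  have part2: "\<not> balanced_distance_magic V E"
  proof
    assume "balanced_distance_magic V E"
    then obtain l where ev: "even (card V)" and bl: "balanced_distance_magic_labeling V E l"
      unfolding balanced_distance_magic_def by blast
    have dl: "distance_magic_labeling V E l" and
      bal: "\<forall>w\<in>V. \<forall>u\<in>nbhd V E w. \<exists>v\<in>nbhd V E w. l v = card V + 1 - l u"
      using bl unfolding balanced_distance_magic_labeling_def by auto
    have bj: "bij_betw l V {1..card V}" using dl unfolding distance_magic_labeling_def by auto
    have adj1: "\<And>x. x < m \<Longrightarrow> cycle_adj m 0 x \<Longrightarrow> cycle_adj m 2 x \<Longrightarrow> x = 1"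
      using assms(3) unfolding cycle_adj_def by (auto simp: modp1 dest: dvd_imp_le)
    have adj2: "\<And>x. x < n \<Longrightarrow> cycle_adj n 0 x \<Longrightarrow> cycle_adj n 2 x \<Longrightarrow> x = 1"
      using assms(4) unfolding cycle_adj_def by (auto simp: modp1 dest: dvd_imp_le)
    have inV: "(0,0) \<in> V" "(2,2) \<in> V" "(1,1) \<in> V" using assms unfolding V_def cycle_verts_def by auto
    have u1: "(1,1) \<in> nbhd V E (0,0)" "(1,1) \<in> nbhd V E (2,2)"
      using assms inV unfolding nbhd_def E_def direct_prod_adj_def cycle_adj_def by auto
    obtain v1 where v1: "v1 \<in> nbhd V E (0,0)" "l v1 = card V + 1 - l (1,1)"
      using bal inV u1 by blast
    obtain v2 where v2: "v2 \<in> nbhd V E (2,2)" "l v2 = card V + 1 - l (1,1)"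
      using bal inV u1 by blast
    have v1V: "v1 \<in> V" "v2 \<in> V" using v1 v2 unfolding nbhd_def by auto
    have "v1 = v2" using bj v1V v1 v2 unfolding bij_betw_def inj_on_def by metis
    then have "v1 = (1,1)" using v1 v2 adj1 adj2 v1V
      unfolding nbhd_def E_def direct_prod_adj_def V_def cycle_verts_def by (auto simp: prod_eq_iff)
    then have e: "l (1,1) = card V + 1 - l (1,1)" using v1 by simp
    have "l (1,1) \<in> {1..card V}" using bj inV unfolding bij_betw_def by auto
    then have "2 * l (1,1) = card V + 1" using e by auto
    then show False using ev by presburger
  qed
  show ?thesis using part1 part2 unfolding V_def E_def by blast
qed

end
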